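(* Let $r\ge2$ and let $(H_n)$ be a sequence of ordered $r$-matchings with $|H_n|\le \frac{1}{2r}\left(\frac{n}{\log n}\right)^{1/r}$. Then a.a.s. $\mathbb{RM}^{(r)}_{n}$ contains a sub-matching order-isomorphic to $H_n$.
   Context: An ordered $r$-matching of size $n$ is a set of $n$ pairwise disjoint $r$-element subsets (edges) of a linearly ordered vertex set of size $rn$; $|H|$ denotes the number of edges of $H$; $\mathbb{RM}^{(r)}_n$ is an ordered $r$-matching on $[rn]$ chosen uniformly at random. A copy of $H$ in $M$ is a set of edges of $M$ which, with the order induced on their union, is order-isomorphic to $H$. "A.a.s." means with probability tending to 1 as $n\to\infty$. *)

theory Defs
  imports Complex_Main
begin

definition perfect_r_matching :: "nat \<Rightarrow> nat set \<Rightarrow> nat set set \<Rightarrow> bool" where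
  "perfect_r_matching r V M \<longleftrightarrow>
     (\<forall>e\<in>M. e \<subseteq> V \<and> card e = r) \<and>
     (\<forall>e\<in>M. \<forall>e'\<in>M. e \<noteq> e' \<longrightarrow> e \<inter> e' = {}) \<and>
     \<Union>M = V"

definition ordered_matching :: "nat \<Rightarrow> nat \<Rightarrow> nat set set \<Rightarrow> bool" where
  "ordered_matching r n M \<longleftrightarrow> perfect_r_matching r {0..<r*n} M"

definition ordered_matchings :: "nat \<Rightarrow> nat \<Rightarrow> nat set set set" where
  "ordered_matchings r n = {M. ordered_matching r n M}"

definition contains_copy :: "nat set set \<Rightarrow> nat set set \<Rightarrow> bool" where
  "contains_copy M H \<longleftrightarrow>
     (\<exists>S\<subseteq>M. \<exists>f::nat \<Rightarrow> nat. strict_mono_on (\<Union>H) f \<and> f ` (\<Union>H) = \<Union>S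
        \<and> (\<lambda>e. f ` e) ` H = S)"

definition prob_contains_copy :: "nat \<Rightarrow> nat \<Rightarrow> nat set set \<Rightarrow> real" where
  "prob_contains_copy r n H =
     real (card {M \<in> ordered_matchings r n. contains_copy M H}) / real (card (ordered_matchings r n))"

end

theory Submission
  imports Defs "HOL-Library.FuncSet"
begin


definition PM :: "nat \<Rightarrow> nat set \<Rightarrow> nat set set set" where
  "PM r V = {M. perfect_r_matching r V M}"
definition Ev :: "nat \<Rightarrow> nat set \<Rightarrow> nat \<Rightarrow> nat set set" where
  "Ev r V v = {e. v \<in> e \<and> e \<subseteq> V \<and> card e = r}"
definition Bad :: "nat \<Rightarrow> nat set set \<Rightarrow> nat set \<Rightarrow> nat set set set" where
  "Bad r G V = {M \<in> PM r V. M \<inter> G = {}}"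

lemma PM_sub: "PM r V \<subseteq> Pow (Pow V)"
  unfolding PM_def perfect_r_matching_def by auto

lemma PM_finite: "finite V \<Longrightarrow> finite (PM r V)"
  by (meson PM_sub finite_Pow_iff finite_subset)

lemma Bad_finite: "finite V \<Longrightarrow> finite (Bad r G V)"
  unfolding Bad_def using PM_finite by auto

lemma Ev_finite: "finite V \<Longrightarrow> finite (Ev r V v)"
  unfolding Ev_def by (rule finite_subset[of _ "Pow V"]) auto

lemma Bad_decomp:
  assumes "v \<in> V"
  shows "Bad r G V = (\<Union>e \<in> Ev r V v - G. insert e ` Bad r G (V - e))"
proof
  show "Bad r G V \<subseteq> (\<Union>e \<in> Ev r V v - G. insert e ` Bad r G (V - e))"
  proof
    fix M assume M: "M \<in> Bad r G V"
    hence pm: "perfect_r_matching r V M" and MG: "M \<inter> G = {}"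
      unfolding Bad_def PM_def by auto
    then obtain e where e: "e \<in> M" "v \<in> e" using assms unfolding perfect_r_matching_def by auto
    have eE: "e \<in> Ev r V v - G" using e pm MG unfolding Ev_def perfect_r_matching_def by auto
    have "perfect_r_matching r (V - e) (M - {e})"
      using pm e unfolding perfect_r_matching_def by blast
    hence "M - {e} \<in> Bad r G (V - e)" using MG unfolding Bad_def PM_def by auto
    moreover have "M = insert e (M - {e})" using e by auto
    ultimately show "M \<in> (\<Union>e \<in> Ev r V v - G. insert e ` Bad r G (V - e))" using eE by blast
  qed
next
  show "(\<Union>e \<in> Ev r V v - G. insert e ` Bad r G (V - e)) \<subseteq> Bad r G V"
  proof (clarify)
    fix e M assume e: "e \<in> Ev r V v" "e \<notin> G" and M: "M \<in> Bad r G (V - e)"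
    hence pm: "perfect_r_matching r (V - e) M" and MG: "M \<inter> G = {}"
      unfolding Bad_def PM_def by auto
    have eV: "e \<subseteq> V" "card e = r" using e unfolding Ev_def by auto
    have "perfect_r_matching r V (insert e M)" unfolding perfect_r_matching_def
    proof (intro conjI)
      show "\<forall>x\<in>insert e M. x \<subseteq> V \<and> card x = r"
        using pm eV unfolding perfect_r_matching_def by auto
      show "\<forall>x\<in>insert e M. \<forall>y\<in>insert e M. x \<noteq> y \<longrightarrow> x \<inter> y = {}"
        using pm unfolding perfect_r_matching_def by fastforce
      show "\<Union>(insert e M) = V"
        using pm eV unfolding perfect_r_matching_def by auto
    qed
    thus "insert e M \<in> Bad r G V" using MG e unfolding Bad_def PM_def by auto
  qed
qed

lemma Bad_card:
  assumes "v \<in> V" "finite V"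
  shows "card (Bad r G V) = (\<Sum>e \<in> Ev r V v - G. card (Bad r G (V - e)))"
proof -
  have "card (Bad r G V) = card (\<Union>e \<in> Ev r V v - G. insert e ` Bad r G (V - e))"
    using Bad_decomp[OF assms(1)] by simp
  also have "\<dots> = (\<Sum>e \<in> Ev r V v - G. card (insert e ` Bad r G (V - e)))"
  proof (rule card_UN_disjoint)
    show "finite (Ev r V v - G)" using Ev_finite assms by auto
    show "\<forall>i\<in>Ev r V v - G. finite (insert i ` Bad r G (V - i))" using Bad_finite assms by auto
    show "\<forall>i\<in>Ev r V v - G. \<forall>j\<in>Ev r V v - G. i \<noteq> j \<longrightarrow>
      insert i ` Bad r G (V - i) \<inter> insert j ` Bad r G (V - j) = {}"
    proof (intro ballI impI)
      fix i j assume i: "i \<in> Ev r V v - G" and j: "j \<in> Ev r V v - G" and ij: "i \<noteq> j"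
      show "insert i ` Bad r G (V - i) \<inter> insert j ` Bad r G (V - j) = {}"
      proof (rule ccontr)
        assume "\<not> ?thesis"
        then obtain M1 M2 where M1: "M1 \<in> Bad r G (V - i)" and M2: "M2 \<in> Bad r G (V - j)"
          and eq: "insert i M1 = insert j M2" by blast
        have "i \<in> M2" using eq ij by blast
        hence "i \<subseteq> V - j" using M2 unfolding Bad_def PM_def perfect_r_matching_def by auto
        moreover have "v \<in> i" "v \<in> j" using i j unfolding Ev_def by auto
        ultimately show False by auto
      qed
    qed
  qed
  also have "\<dots> = (\<Sum>e \<in> Ev r V v - G. card (Bad r G (V - e)))"
  proof (rule sum.cong[OF refl], rule card_image, rule inj_onI)
    fix e M1 M2 assume e: "e \<in> Ev r V v - G" and M1: "M1 \<in> Bad r G (V - e)"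
      and M2: "M2 \<in> Bad r G (V - e)" and eq: "insert e M1 = insert e M2"
    have "v \<in> e" using e unfolding Ev_def by auto
    hence "e \<notin> M1" "e \<notin> M2" using M1 M2 unfolding Bad_def PM_def perfect_r_matching_def by auto
    thus "M1 = M2" using eq by (metis insert_ident)
  qed
  finally show ?thesis .
qed

lemma Ev_card:
  assumes "finite V" "v \<in> V" "r \<ge> 1"
  shows "card (Ev r V v) = (card V - 1) choose (r - 1)"
proof -
  have "Ev r V v = insert v ` {A. A \<subseteq> V - {v} \<and> card A = r - 1}"
  proof
    show "Ev r V v \<subseteq> insert v ` {A. A \<subseteq> V - {v} \<and> card A = r - 1}"
    proof
      fix e assume e: "e \<in> Ev r V v"
      hence fe: "finite e" using assms finite_subset unfolding Ev_def by auto
      have "e = insert v (e - {v})" "e - {v} \<subseteq> V - {v}" "card (e - {v}) = r - 1"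
        using e fe unfolding Ev_def by auto
      thus "e \<in> insert v ` {A. A \<subseteq> V - {v} \<and> card A = r - 1}" by blast
    qed
  next
    show "insert v ` {A. A \<subseteq> V - {v} \<and> card A = r - 1} \<subseteq> Ev r V v"
    proof clarify
      fix A assume A: "A \<subseteq> V - {v}" "card A = r - 1"
      hence "finite A" using assms finite_subset by blast
      moreover have "v \<notin> A" using A by auto
      ultimately have "card (insert v A) = r" using A assms by simp
      thus "insert v A \<in> Ev r V v" using A assms unfolding Ev_def by auto
    qed
  qed
  also have "card \<dots> = card {A. A \<subseteq> V - {v} \<and> card A = r - 1}"
  proof (rule card_image, rule inj_onI)
    fix A B assume "A \<in> {A. A \<subseteq> V - {v} \<and> card A = r - 1}" "B \<in> {A. A \<subseteq> V - {v} \<and> card A = r - 1}"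
      and "insert v A = insert v B"
    hence "v \<notin> A" "v \<notin> B" "insert v A - {v} = insert v B - {v}" by auto
    thus "A = B" by simp
  qed
  also have "\<dots> = card (V - {v}) choose (r - 1)" by (rule n_subsets, use assms in simp)
  finally show ?thesis using assms by simp
qed



fun fm :: "nat \<Rightarrow> nat \<Rightarrow> nat" where
  "fm r 0 = 1"
| "fm r (Suc N) = (N choose (r - 1)) * fm r (N - (r - 1))"

lemma Bad_empty: "Bad r {} V = PM r V"
  unfolding Bad_def by auto

lemma PM_empty: assumes "r \<ge> 1" shows "PM r {} = {{}}"
proof -
  have "M = {}" if "perfect_r_matching r {} M" for M
  proof (rule ccontr)
    assume "M \<noteq> {}" then obtain e where "e \<in> M" by auto
    with that have "e = {}" "card e = r" unfolding perfect_r_matching_def by auto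
    with assms show False by simp
  qed
  moreover have "perfect_r_matching r {} {}" unfolding perfect_r_matching_def by auto
  ultimately show ?thesis unfolding PM_def by auto
qed

lemma PM_card:
  assumes "r \<ge> 1"
  shows "finite V \<Longrightarrow> card (PM r V) = fm r (card V)"
proof (induction "card V" arbitrary: V rule: less_induct)
  case less
  show ?case
  proof (cases "V = {}")
    case True thus ?thesis using PM_empty[OF assms] by simp
  next
    case False
    then obtain v where v: "v \<in> V" by auto
    obtain N where N: "card V = Suc N" using False less.prems by (cases "card V") auto
    have "card (PM r V) = (\<Sum>e \<in> Ev r V v. card (PM r (V - e)))"
      using Bad_card[OF v less.prems, of r "{}"] by (simp add: Bad_empty)
    also have "\<dots> = (\<Sum>e \<in> Ev r V v. fm r (N - (r - 1)))"
    proof (rule sum.cong[OF refl])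
      fix e assume e: "e \<in> Ev r V v"
      hence eV: "e \<subseteq> V" "card e = r" unfolding Ev_def by auto
      hence fe: "finite e" using less.prems finite_subset by auto
      have c: "card (V - e) = N - (r - 1)" using eV N fe assms by (simp add: card_Diff_subset)
      have "card (V - e) < card V" using c N by simp
      thus "card (PM r (V - e)) = fm r (N - (r - 1))"
        using less.hyps[of "V - e"] less.prems c by simp
    qed
    also have "\<dots> = card (Ev r V v) * fm r (N - (r - 1))" by simp
    also have "\<dots> = fm r (card V)" using Ev_card[OF less.prems v assms] N by simp
    finally show ?thesis .
  qed
qed

lemma fm_pos: assumes "r \<ge> 1" shows "fm r (r * n) > 0"
proof (induction n)
  case 0 thus ?case by simp
next
  case (Suc n)
  have e: "r * Suc n = Suc (r * n + (r - 1))" using assms by simp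
  have "fm r (r * Suc n) = ((r*n + (r-1)) choose (r-1)) * fm r (r*n)" unfolding e by simp
  moreover have "((r*n + (r-1)) choose (r-1)) > 0" by (simp add: zero_less_binomial)
  ultimately show ?case using Suc by simp
qed



lemma disjD:
  assumes "\<forall>p\<in>P. \<forall>q\<in>P. p \<noteq> q \<longrightarrow> J p \<inter> J q = {}" "p \<in> P" "q \<in> P" "x \<in> J p" "x \<in> J q"
  shows "p = q"
  using assms by blast

lemma good_count:
  assumes r1: "r \<ge> 1" and fP: "finite P" and cP: "card P = r" and p0: "p0 \<in> P"
    and disj: "\<forall>p\<in>P. \<forall>q\<in>P. p \<noteq> q \<longrightarrow> J p \<inter> J q = {}"
    and v: "v \<in> J p0" "v \<in> V" and fV: "finite V"
    and big: "\<forall>p\<in>P. a \<le> card (J p \<inter> V)"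
    and G: "G = {e. e \<subseteq> \<Union>(J ` P) \<and> (\<forall>p\<in>P. card (e \<inter> J p) = 1)}"
  shows "a ^ (r - 1) \<le> card (Ev r V v \<inter> G)"
proof -
  define Q where "Q = P - {p0}"
  define D where "D = (\<Pi>\<^sub>E p \<in> Q. J p \<inter> V)"
  define \<phi> where "\<phi> = (\<lambda>g. insert v (g ` Q))"
  have fQ: "finite Q" and cQ: "card Q = r - 1" using fP cP p0 unfolding Q_def by auto
  have key: "\<phi> g \<inter> J p = {if p = p0 then v else g p}" if g: "g \<in> D" and p: "p \<in> P" for g p
  proof
    show "\<phi> g \<inter> J p \<subseteq> {if p = p0 then v else g p}"
    proof
      fix x assume x: "x \<in> \<phi> g \<inter> J p"
      show "x \<in> {if p = p0 then v else g p}"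
      proof (cases "x = v")
        case True
        hence "p = p0" using disjD[OF disj p p0, of x] x v by simp
        thus ?thesis using True by simp
      next
        case False
        then obtain q where q: "q \<in> Q" "x = g q" using x unfolding \<phi>_def by auto
        have "g q \<in> J q" using g q unfolding D_def by auto
        have "q \<in> P" using q unfolding Q_def by simp
        hence "q = p" using disjD[OF disj _ p, of q x] q x \<open>g q \<in> J q\<close> by simp
        thus ?thesis using q unfolding Q_def by auto
      qed
    qed
  next
    show "{if p = p0 then v else g p} \<subseteq> \<phi> g \<inter> J p"
      using g p v unfolding D_def \<phi>_def Q_def by auto
  qed
  have sub: "\<phi> ` D \<subseteq> Ev r V v \<inter> G"
  proof
    fix e assume "e \<in> \<phi> ` D"
    then obtain g where g: "g \<in> D" and e: "e = \<phi> g" by auto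
    have gJ: "\<And>q. q \<in> Q \<Longrightarrow> g q \<in> J q \<inter> V" using g unfolding D_def by auto
    have vn: "v \<notin> g ` Q"
    proof
      assume "v \<in> g ` Q"
      then obtain q where "q \<in> Q" "v = g q" by auto
      moreover have "q \<in> P" "q \<noteq> p0" using \<open>q \<in> Q\<close> unfolding Q_def by auto
      ultimately show False using gJ[of q] v disjD[OF disj _ p0, of q v] by simp
    qed
    have inj: "inj_on g Q"
    proof (rule inj_onI)
      fix q1 q2 assume "q1 \<in> Q" "q2 \<in> Q" "g q1 = g q2"
      moreover have "q1 \<in> P" "q2 \<in> P" using \<open>q1 \<in> Q\<close> \<open>q2 \<in> Q\<close> unfolding Q_def by auto
      ultimately show "q1 = q2" using gJ[of q1] gJ[of q2] disjD[OF disj, of q1 q2 "g q1"] by simp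
    qed
    have "card e = r" using vn inj fQ cQ r1 unfolding e \<phi>_def by (simp add: card_image)
    moreover have "e \<subseteq> V" "v \<in> e" using gJ v unfolding e \<phi>_def by auto
    moreover have "e \<subseteq> \<Union>(J ` P)" using gJ v p0 unfolding e \<phi>_def Q_def by auto
    moreover have "\<forall>p\<in>P. card (e \<inter> J p) = 1" using key[OF g] unfolding e by simp
    ultimately show "e \<in> Ev r V v \<inter> G" unfolding Ev_def G by auto
  qed
  have injphi: "inj_on \<phi> D"
  proof (rule inj_onI)
    fix g1 g2 assume g1: "g1 \<in> D" and g2: "g2 \<in> D" and eq: "\<phi> g1 = \<phi> g2"
    show "g1 = g2"
    proof (rule extensionalityI)
      show "g1 \<in> extensional Q" using g1 unfolding D_def by (simp add: PiE_iff)
      show "g2 \<in> extensional Q" using g2 unfolding D_def by (simp add: PiE_iff)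
      fix q assume q: "q \<in> Q"
      hence "q \<in> P" "q \<noteq> p0" unfolding Q_def by auto
      hence "{g1 q} = {g2 q}" using key[OF g1, of q] key[OF g2, of q] eq by simp
      thus "g1 q = g2 q" by simp
    qed
  qed
  have "a ^ (r - 1) = (\<Prod>p\<in>Q. a)" using cQ by simp
  also have "\<dots> \<le> (\<Prod>p\<in>Q. card (J p \<inter> V))"
    by (rule prod_mono) (use big in \<open>auto simp: Q_def\<close>)
  also have "\<dots> = card D" unfolding D_def using fQ by (simp add: card_PiE)
  also have "\<dots> = card (\<phi> ` D)" using injphi by (simp add: card_image)
  also have "\<dots> \<le> card (Ev r V v \<inter> G)"
    by (rule card_mono) (use Ev_finite[OF fV] sub in auto)
  finally show ?thesis .
qed



lemma choose_le_R: assumes "N < R" shows "real (N choose k) \<le> real R ^ k"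
proof (cases "k \<le> N")
  case True
  have "N choose k \<le> N ^ k" using binomial_le_pow[OF True] .
  also have "\<dots> \<le> R ^ k" using assms by (simp add: power_mono)
  finally show ?thesis by (metis of_nat_le_iff of_nat_power)
next
  case False thus ?thesis by (simp add: binomial_eq_0)
qed

lemma bad_bound:
  assumes r1: "r \<ge> 1" and fP: "finite P" and cP: "card P = r" and p0: "p0 \<in> P"
    and disj: "\<forall>p\<in>P. \<forall>q\<in>P. p \<noteq> q \<longrightarrow> J p \<inter> J q = {}"
    and G: "G = {e. e \<subseteq> \<Union>(J ` P) \<and> (\<forall>p\<in>P. card (e \<inter> J p) = 1)}"
  shows "finite V \<Longrightarrow> card V \<le> R \<Longrightarrow> (\<forall>p\<in>P. a + r * t \<le> card (J p \<inter> V)) \<Longrightarrow>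
    real (card (Bad r G V)) \<le> exp (- (real t * (real a ^ (r - 1) / real R ^ (r - 1)))) * real (fm r (card V))"
proof (induction t arbitrary: V)
  case 0
  have "card (Bad r G V) \<le> card (PM r V)"
    by (rule card_mono) (use PM_finite[OF 0(1)] in \<open>auto simp: Bad_def\<close>)
  thus ?case using PM_card[OF r1 0(1)] by simp
next
  case (Suc t)
  define x where "x = real a ^ (r - 1) / real R ^ (r - 1)"
  have "a + r * Suc t \<le> card (J p0 \<inter> V)" using Suc.prems(3) p0 by blast
  hence "r \<le> card (J p0 \<inter> V)" by simp
  hence "J p0 \<inter> V \<noteq> {}" using r1 by auto
  then obtain v where v: "v \<in> J p0" "v \<in> V" by auto
  obtain N where N: "card V = Suc N" using v Suc.prems(1) by (cases "card V") auto
  have NR: "N < R" using N Suc.prems(2) by simp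
  define C where "C = N choose (r - 1)"
  have fE: "finite (Ev r V v)" using Ev_finite[OF Suc.prems(1)] .
  have cE: "card (Ev r V v) = C" using Ev_card[OF Suc.prems(1) v(2) r1] N C_def by simp
  have goodc: "a ^ (r - 1) \<le> card (Ev r V v \<inter> G)"
  proof (rule good_count[OF r1 fP cP p0 disj v Suc.prems(1) _ G])
    show "\<forall>p\<in>P. a \<le> card (J p \<inter> V)" using Suc.prems(3) by (meson le_add1 le_trans)
  qed
  have split: "card (Ev r V v - G) + card (Ev r V v \<inter> G) = C"
  proof -
    have "card (Ev r V v - G) = card (Ev r V v) - card (Ev r V v \<inter> G)"
      by (rule card_Diff_subset_Int) (use fE in auto)
    moreover have "card (Ev r V v \<inter> G) \<le> card (Ev r V v)" by (rule card_mono[OF fE]) auto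
    ultimately show ?thesis using cE by simp
  qed
  have each: "real (card (Bad r G (V - e))) \<le> exp (- (real t * x)) * real (fm r (N - (r - 1)))"
    if e: "e \<in> Ev r V v - G" for e
  proof -
    have eV: "e \<subseteq> V" "card e = r" using e unfolding Ev_def by auto
    hence fe: "finite e" using Suc.prems(1) finite_subset by auto
    have c: "card (V - e) = N - (r - 1)" using eV N fe r1 by (simp add: card_Diff_subset)
    have "\<forall>p\<in>P. a + r * t \<le> card (J p \<inter> (V - e))"
    proof
      fix p assume p: "p \<in> P"
      have "card (J p \<inter> V) - card e \<le> card (J p \<inter> V - e)" by (rule diff_card_le_card_Diff[OF fe])
      moreover have "J p \<inter> V - e = J p \<inter> (V - e)" by auto
      moreover have "a + r * Suc t \<le> card (J p \<inter> V)" using Suc.prems(3) p by auto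
      ultimately show "a + r * t \<le> card (J p \<inter> (V - e))" using eV by simp
    qed
    moreover have "card (V - e) \<le> R" using Suc.prems(1,2) card_Diff_subset fe eV
      by (meson Diff_subset card_mono le_trans)
    ultimately show ?thesis using Suc.IH[of "V - e"] Suc.prems(1) c x_def by simp
  qed
  have "real (card (Bad r G V)) = (\<Sum>e \<in> Ev r V v - G. real (card (Bad r G (V - e))))"
    using Bad_card[OF v(2) Suc.prems(1), of r G] by simp
  also have "\<dots> \<le> (\<Sum>e \<in> Ev r V v - G. exp (- (real t * x)) * real (fm r (N - (r - 1))))"
    by (rule sum_mono) (use each in auto)
  also have "\<dots> = real (card (Ev r V v - G)) * (exp (- (real t * x)) * real (fm r (N - (r - 1))))"
    by simp
  also have "\<dots> \<le> (real C * exp (- x)) * (exp (- (real t * x)) * real (fm r (N - (r - 1))))"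
  proof (rule mult_right_mono)
    have CR: "real C \<le> real R ^ (r - 1)" unfolding C_def by (rule choose_le_R[OF NR])
    have "real (card (Ev r V v - G)) \<le> real C - real a ^ (r - 1)"
    proof -
      have "real (card (Ev r V v - G)) + real (card (Ev r V v \<inter> G)) = real C"
        using split by (metis of_nat_add)
      moreover have "real a ^ (r - 1) \<le> real (card (Ev r V v \<inter> G))"
        using goodc by (metis of_nat_le_iff of_nat_power)
      ultimately show ?thesis by linarith
    qed
    also have "\<dots> \<le> real C * (1 - x)"
    proof (cases "real R ^ (r - 1) = 0")
      case True
      have "real C \<ge> 0" by simp
      hence "real C = 0" using CR True by linarith
      thus ?thesis by simp
    next
      case False
      have "real R ^ (r - 1) \<ge> 0" by simp
      hence pos: "real R ^ (r - 1) > 0" using False by linarith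
      have "real C * x \<le> real a ^ (r - 1)"
        unfolding x_def using CR pos by (simp add: field_simps mult_right_mono)
      thus ?thesis by (simp add: algebra_simps)
    qed
    also have "\<dots> \<le> real C * exp (- x)"
      by (rule mult_left_mono) (use exp_ge_add_one_self[of "- x"] in auto)
    finally show "real (card (Ev r V v - G)) \<le> real C * exp (- x)" .
    show "0 \<le> exp (- (real t * x)) * real (fm r (N - (r - 1)))" by simp
  qed
  also have "\<dots> = exp (- (real (Suc t) * x)) * real (fm r (card V))"
  proof -
    have "exp (- x) * exp (- (real t * x)) = exp (- (real (Suc t) * x))"
      by (simp add: exp_add[symmetric] algebra_simps)
    moreover have "fm r (card V) = C * fm r (N - (r - 1))" using N C_def by simp
    ultimately show ?thesis by (simp add: algebra_simps)
  qed
  finally show ?case unfolding x_def .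
qed



lemma interval_disj:
  "p \<noteq> q \<Longrightarrow> {p*m..<(p+1)*m} \<inter> {q*m..<(q+1)*m} = ({}::nat set)"
proof (rule ccontr)
  assume pq: "p \<noteq> q" and "{p*m..<(p+1)*m} \<inter> {q*m..<(q+1)*m} \<noteq> {}"
  then obtain y where "y \<in> {p*m..<(p+1)*m}" "y \<in> {q*m..<(q+1)*m}" by blast
  hence y: "p*m \<le> y" "y < (p+1)*m" "q*m \<le> y" "y < (q+1)*m" by auto
  show False
  proof (cases "p < q")
    case True
    hence "(p+1)*m \<le> q*m" by (intro mult_le_mono1) simp
    thus False using y by simp
  next
    case False
    hence "(q+1)*m \<le> p*m" using pq by (intro mult_le_mono1) simp
    thus False using y by simp
  qed
qed

lemma copy_lemma:
  assumes om: "ordered_matching r k H" and m: "m > 0"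
    and I: "I = (\<lambda>p. {p*m..<(p+1)*m})"
    and all: "\<forall>h\<in>H. \<exists>e\<in>M. e \<subseteq> \<Union>(I ` h) \<and> (\<forall>p\<in>h. card (e \<inter> I p) = 1)"
  shows "contains_copy M H"
proof -
  have Hd: "\<And>h h'. h \<in> H \<Longrightarrow> h' \<in> H \<Longrightarrow> h \<noteq> h' \<Longrightarrow> h \<inter> h' = {}"
    using om unfolding ordered_matching_def perfect_r_matching_def by auto
  obtain es where es: "\<forall>h\<in>H. es h \<in> M \<and> es h \<subseteq> \<Union>(I ` h) \<and> (\<forall>p\<in>h. card (es h \<inter> I p) = 1)"
  proof -
    have "\<forall>h\<in>H. \<exists>e. e \<in> M \<and> e \<subseteq> \<Union>(I ` h) \<and> (\<forall>p\<in>h. card (e \<inter> I p) = 1)"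
      using all by blast
    from bchoice[OF this] show ?thesis using that by blast
  qed
  define hof where "hof x = (THE h. h \<in> H \<and> x \<in> h)" for x
  define f where "f x = (SOME y. y \<in> es (hof x) \<inter> I x)" for x
  have hof: "hof x = h" if "h \<in> H" "x \<in> h" for h x
    unfolding hof_def using that Hd by (intro the_equality) auto
  have f1: "f x \<in> es h \<inter> I x" and f2: "\<And>y. y \<in> es h \<inter> I x \<Longrightarrow> y = f x"
    if "h \<in> H" "x \<in> h" for h x
  proof -
    have "card (es h \<inter> I x) = 1" using es that by auto
    then obtain z where z: "es h \<inter> I x = {z}" using card_1_singletonE by blast
    have "f x = z" unfolding f_def hof[OF that] z by simp
    thus "f x \<in> es h \<inter> I x" using z by simp
    show "\<And>y. y \<in> es h \<inter> I x \<Longrightarrow> y = f x" using z \<open>f x = z\<close> by auto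
  qed
  have fI: "f x \<in> I x" if "x \<in> \<Union>H" for x using f1 that by blast
  have sm: "strict_mono_on (\<Union>H) f"
  proof (rule strict_mono_onI)
    fix x y assume x: "x \<in> \<Union>H" and y: "y \<in> \<Union>H" and xy: "x < y"
    have "f x < (x+1)*m" using fI[OF x] I by simp
    also have "(x+1)*m \<le> y*m" using xy by (intro mult_le_mono1) simp
    also have "y*m \<le> f y" using fI[OF y] I by simp
    finally show "f x < f y" .
  qed
  have img: "f ` h = es h" if h: "h \<in> H" for h
  proof
    show "f ` h \<subseteq> es h" using f1[OF h] by auto
    show "es h \<subseteq> f ` h"
    proof
      fix y assume y: "y \<in> es h"
      then obtain p where p: "p \<in> h" "y \<in> I p" using es h by blast
      hence "y = f p" using f2[OF h p(1)] y by simp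
      thus "y \<in> f ` h" using p by auto
    qed
  qed
  have c1: "(\<lambda>e. f ` e) ` H = es ` H" by (rule image_cong[OF refl]) (use img in simp)
  have c2: "f ` \<Union>H = \<Union>(es ` H)" using c1 by (simp only: image_Union)
  have c3: "es ` H \<subseteq> M" using es by auto
  show ?thesis unfolding contains_copy_def
    by (rule exI[of _ "es ` H"], rule conjI[OF c3], rule exI[of _ f]) (simp only: sm c1 c2)
qed

lemma card_H:
  assumes "ordered_matching r k H" "r \<ge> 1"
  shows "card H = k"
proof -
  have pm: "perfect_r_matching r {0..<r*k} H" using assms unfolding ordered_matching_def by auto
  have "r * k = card (\<Union>H)" using pm unfolding perfect_r_matching_def by simp
  also have "\<dots> = sum card H"
  proof (rule card_Union_disjoint)
    show "pairwise disjnt H" using pm unfolding perfect_r_matching_def pairwise_def disjnt_def by auto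
    show "\<And>A. A \<in> H \<Longrightarrow> finite A" using pm unfolding perfect_r_matching_def
      by (meson finite_atLeastLessThan finite_subset)
  qed
  also have "\<dots> = card H * r" using pm unfolding perfect_r_matching_def by simp
  finally show ?thesis using assms(2) by simp
qed



lemma R1:
  fixes K nn m t a :: real and s :: nat
  assumes s1: "s \<ge> 1" and K1: "K \<ge> 1" and n3: "nn \<ge> 3"
    and Kr: "K ^ (s+1) * ((2 * (real s + 1)) ^ (s+1) * ln nn) \<le> nn"
    and mu: "m \<ge> nn / K - 1"
    and tm: "t \<ge> m / (2 * (real s + 1)) - 1"
    and am: "a \<ge> m / 2"
    and big: "sqrt nn \<ge> 8 * (real s + 1) * (real s + 2) + 1"
  shows "K * exp (- (t * (a ^ s / ((real s + 1) * nn) ^ s))) \<le> nn powr (-1/4) \<and> K ^ 2 \<le> nn"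
proof -
  define rr where "rr = real s + 1"
  define L where "L = ln nn"
  define u where "u = nn / K"
  define \<delta> where "\<delta> = 1 / (4 * (rr + 1))"
  have rr1: "rr \<ge> 2" using s1 unfolding rr_def by simp
  have npos: "nn > 0" using n3 by simp
  have L1: "L \<ge> 1"
  proof -
    have "ln (exp 1) \<le> ln nn" using exp_le n3 by (subst ln_le_cancel_iff) auto
    thus ?thesis unfolding L_def by simp
  qed
  have c1: "(2 * rr) ^ (s+1) * L \<ge> 1"
  proof -
    have "(2 * rr) ^ (s+1) \<ge> 1" using rr1 by (intro one_le_power) simp
    thus ?thesis using L1 by (metis mult_mono' mult_1_right order_trans zero_le_one mult_le_cancel_left1 le_numeral_extra(1) less_le_not_le not_le)
  qed
  have K2: "K ^ 2 \<le> nn"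
  proof -
    have "K ^ 2 \<le> K ^ (s+1)" using s1 K1 by (intro power_increasing) auto
    also have "\<dots> = K ^ (s+1) * 1" by simp
    also have "\<dots> \<le> K ^ (s+1) * ((2 * rr) ^ (s+1) * L)"
      by (rule mult_left_mono[OF c1]) (use K1 in simp)
    also have "\<dots> \<le> nn" using Kr unfolding rr_def L_def by simp
    finally show ?thesis .
  qed
  have Ks: "K \<le> sqrt nn" using real_le_rsqrt[OF K2] .
  have sq: "sqrt nn * sqrt nn = nn" using npos by simp
  have us: "u \<ge> sqrt nn"
  proof -
    have "sqrt nn * K \<le> sqrt nn * sqrt nn" by (rule mult_left_mono[OF Ks]) (use npos in simp)
    thus ?thesis unfolding u_def using K1 sq by (simp add: field_simps)
  qed
  have mbig0: "m \<ge> 8 * (real s + 1) * (real s + 2)" using mu us big unfolding u_def by linarith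
  have b2: "8 * rr * (rr + 1) = 8 * (real s + 1) * (real s + 2)" unfolding rr_def by (simp add: algebra_simps)
  have mbig: "m \<ge> 8 * rr * (rr + 1)" using mbig0 b2 by simp
  have ubig: "u \<ge> 4 * (rr + 1)"
  proof -
    have "4 * (rr+1) \<le> (8*rr) * (rr+1)" by (rule mult_right_mono) (use rr1 in auto)
    hence "8 * rr * (rr + 1) \<ge> 4 * (rr + 1)" by simp
    thus ?thesis using us big b2 by linarith
  qed
  have dpos: "\<delta> > 0" "\<delta> < 1" using rr1 unfolding \<delta>_def by auto
  have mu2: "m \<ge> (1 - \<delta>) * u"
  proof -
    have "\<delta> * u \<ge> 1" using ubig rr1 unfolding \<delta>_def by (simp add: field_simps)
    moreover have "(1 - \<delta>) * u = u - \<delta> * u" by (simp only: left_diff_distrib mult_1)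
    moreover have "m \<ge> u - 1" using mu unfolding u_def .
    ultimately show ?thesis by linarith
  qed
  have mpos: "m > 0" using mbig rr1 by (smt (verit) mult_pos_pos)
  have tm2: "t \<ge> (1 - \<delta>) * (m / (2 * rr))"
  proof -
    have p8: "8 * rr * (rr + 1) > 0" using rr1 by simp
    have "\<delta> * (m / (2 * rr)) = m / (8 * rr * (rr + 1))" unfolding \<delta>_def using rr1 by (simp add: field_simps)
    moreover have "m / (8 * rr * (rr + 1)) \<ge> 1" using mbig p8 by (simp add: le_divide_eq_1_pos)
    ultimately have "\<delta> * (m / (2 * rr)) \<ge> 1" by simp
    moreover have "(1 - \<delta>) * (m / (2 * rr)) = m / (2 * rr) - \<delta> * (m / (2 * rr))" by (simp only: left_diff_distrib mult_1)
    moreover have "t \<ge> m / (2 * rr) - 1" using tm unfolding rr_def .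
    ultimately show ?thesis by linarith
  qed
  have E1: "t * a ^ s \<ge> ((1 - \<delta>) * (m / (2 * rr))) * (m / 2) ^ s"
  proof (rule mult_mono[OF tm2])
    show "(m / 2) ^ s \<le> a ^ s" using am mpos by (intro power_mono) auto
    show "0 \<le> t" using tm2 dpos mpos rr1 by (smt (verit) divide_pos_pos mult_pos_pos)
    show "0 \<le> (m / 2) ^ s" using mpos by simp
  qed
  have eq: "((1 - \<delta>) * (m / (2 * rr))) * (m / 2) ^ s / (rr * nn) ^ s
      = (1 - \<delta>) * m ^ (s+1) / ((2 * rr) ^ (s+1) * nn ^ s)"
    using rr1 npos by (simp add: power_mult_distrib power_divide field_simps)
  have mr: "m ^ (s+1) \<ge> (1 - \<delta>) ^ (s+1) * u ^ (s+1)"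
  proof -
    have "((1 - \<delta>) * u) ^ (s+1) \<le> m ^ (s+1)"
      using mu2 dpos ubig rr1 by (intro power_mono) auto
    thus ?thesis by (simp only: power_mult_distrib)
  qed
  have ur: "u ^ (s+1) \<ge> nn ^ s * (2 * rr) ^ (s+1) * L"
  proof -
    have Kp: "K ^ (s+1) > 0" using K1 by simp
    have "nn ^ s * ((2 * rr) ^ (s+1) * L * K ^ (s+1)) \<le> nn ^ s * nn"
      using Kr npos unfolding rr_def L_def by (intro mult_left_mono) (auto simp: algebra_simps)
    hence "nn ^ s * (2 * rr) ^ (s+1) * L * K ^ (s+1) \<le> nn ^ (s+1)" by (simp add: algebra_simps)
    thus ?thesis unfolding u_def using Kp by (simp add: power_divide field_simps)
  qed
  define E where "E = t * (a ^ s / (rr * nn) ^ s)"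
  have dn: "(rr * nn) ^ s > 0" using rr1 npos by simp
  have "E \<ge> (1 - \<delta>) * m ^ (s+1) / ((2 * rr) ^ (s+1) * nn ^ s)"
  proof -
    have "E = t * a ^ s / (rr * nn) ^ s" unfolding E_def by simp
    moreover have "t * a ^ s / (rr * nn) ^ s \<ge> ((1 - \<delta>) * (m / (2 * rr))) * (m / 2) ^ s / (rr * nn) ^ s"
      by (rule divide_right_mono[OF E1]) (use dn in simp)
    ultimately show ?thesis using eq by simp
  qed
  moreover have "(1 - \<delta>) * m ^ (s+1) / ((2 * rr) ^ (s+1) * nn ^ s)
      \<ge> (1 - \<delta>) * ((1 - \<delta>) ^ (s+1) * u ^ (s+1)) / ((2 * rr) ^ (s+1) * nn ^ s)"
    using mr dpos rr1 npos by (intro divide_right_mono mult_left_mono) auto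
  moreover have "(1 - \<delta>) * ((1 - \<delta>) ^ (s+1) * u ^ (s+1)) / ((2 * rr) ^ (s+1) * nn ^ s)
      \<ge> (1 - \<delta>) ^ (s+2) * L"
  proof -
    have pd: "(2 * rr) ^ (s+1) * nn ^ s > 0" using rr1 npos by simp
    have "(1 - \<delta>) ^ (s+2) * (nn ^ s * (2 * rr) ^ (s+1) * L) \<le> (1 - \<delta>) ^ (s+2) * u ^ (s+1)"
      using ur dpos by (intro mult_left_mono) auto
    moreover have "(1 - \<delta>) ^ (s+2) * (nn ^ s * (2 * rr) ^ (s+1) * L) = (1 - \<delta>) ^ (s+2) * L * ((2 * rr) ^ (s+1) * nn ^ s)"
      by (simp only: ac_simps)
    moreover have "(1 - \<delta>) ^ (s+2) = (1 - \<delta>) * (1 - \<delta>) ^ (s+1)"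
    proof -
      have "(1 - \<delta>) ^ (s+2) = (1 - \<delta>) ^ (Suc (s+1))" by simp
      also have "\<dots> = (1 - \<delta>) * (1 - \<delta>) ^ (s+1)" by (rule power_Suc)
      finally show ?thesis .
    qed
    ultimately have "(1 - \<delta>) ^ (s+2) * L * ((2 * rr) ^ (s+1) * nn ^ s) \<le> (1 - \<delta>) * ((1 - \<delta>) ^ (s+1) * u ^ (s+1))"
      by (simp only: mult.assoc)
    thus ?thesis by (subst pos_le_divide_eq[OF pd])
  qed
  moreover have "(1 - \<delta>) ^ (s+2) \<ge> 3/4"
  proof -
    have "1 + real (s+2) * (- \<delta>) \<le> (1 + (- \<delta>)) ^ (s+2)"
      by (rule Bernoulli_inequality) (use dpos in auto)
    moreover have "real (s+2) * \<delta> = 1/4" unfolding \<delta>_def rr_def by (simp add: field_simps)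
    ultimately show ?thesis by (simp add: algebra_simps)
  qed
  ultimately have EL: "E \<ge> 3/4 * L" using L1 by (smt (verit) mult_right_mono)
  have "K * exp (- E) \<le> sqrt nn * exp (- (3/4 * L))"
    using Ks EL K1 npos by (intro mult_mono) auto
  also have "\<dots> = nn powr (1/2) * nn powr (- (3/4))"
  proof -
    have "sqrt nn = nn powr (1/2)" using powr_half_sqrt[of nn] npos by simp
    moreover have "exp (- (3/4 * L)) = nn powr (- (3/4))" unfolding L_def powr_def using npos by simp
    ultimately show ?thesis by simp
  qed
  also have "\<dots> = nn powr (-1/4)" by (simp add: powr_add[symmetric])
  finally have "K * exp (- E) \<le> nn powr (-1/4)" .
  thus ?thesis using K2 unfolding E_def rr_def by simp
qed



lemma OM_eq: "ordered_matchings r n = PM r {0..<r*n}"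
  unfolding ordered_matchings_def ordered_matching_def PM_def by simp

lemma noncopy_bound:
  assumes r1: "r \<ge> 1" and om: "ordered_matching r k H" and k1: "k \<ge> 1"
    and mdef: "m = n div k" and mpos: "m > 0" and at: "a + r * t \<le> m"
  shows "real (card {M \<in> ordered_matchings r n. \<not> contains_copy M H})
    \<le> real k * (exp (- (real t * (real a ^ (r - 1) / real (r*n) ^ (r - 1)))) * real (fm r (r*n)))"
proof -
  define V where "V = {0..<r*n}"
  define I where "I = (\<lambda>p::nat. {p*m..<(p+1)*m})"
  define GH where "GH h = {e. e \<subseteq> \<Union>(I ` h) \<and> (\<forall>p\<in>h. card (e \<inter> I p) = 1)}" for h
  define B where "B = exp (- (real t * (real a ^ (r - 1) / real (r*n) ^ (r - 1)))) * real (fm r (r*n))"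
  have OM: "ordered_matchings r n = PM r V" unfolding V_def by (rule OM_eq)
  have pm: "perfect_r_matching r {0..<r*k} H" using om unfolding ordered_matching_def .
  have cH: "card H = k" using card_H[OF om r1] .
  have fH: "finite H" using cH k1 by (metis card.infinite not_one_le_zero)
  have fV: "finite V" and cV: "card V = r * n" unfolding V_def by auto
  have sub: "{M \<in> PM r V. \<not> contains_copy M H} \<subseteq> (\<Union>h\<in>H. Bad r (GH h) V)"
  proof (clarify)
    fix M assume M: "M \<in> PM r V" "\<not> contains_copy M H"
    show "M \<in> (\<Union>h\<in>H. Bad r (GH h) V)"
    proof (rule ccontr)
      assume "M \<notin> (\<Union>h\<in>H. Bad r (GH h) V)"
      hence "\<forall>h\<in>H. M \<inter> GH h \<noteq> {}" using M unfolding Bad_def by blast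
      hence "\<forall>h\<in>H. \<exists>e\<in>M. e \<in> GH h" by blast
      hence "\<forall>h\<in>H. \<exists>e\<in>M. e \<subseteq> \<Union>(I ` h) \<and> (\<forall>p\<in>h. card (e \<inter> I p) = 1)"
        unfolding GH_def mem_Collect_eq .
      hence "contains_copy M H" by (rule copy_lemma[OF om mpos I_def])
      with M show False by simp
    qed
  qed
  have km: "k * m \<le> n" using mdef by simp
  have each: "real (card (Bad r (GH h) V)) \<le> B" if h: "h \<in> H" for h
  proof -
    have hs: "h \<subseteq> {0..<r*k}" and ch: "card h = r" using pm h unfolding perfect_r_matching_def by auto
    have fh: "finite h" using hs finite_subset by blast
    have "h \<noteq> {}" using ch r1 by auto
    then obtain p0 where p0: "p0 \<in> h" by auto
    have disj: "\<forall>p\<in>h. \<forall>q\<in>h. p \<noteq> q \<longrightarrow> I p \<inter> I q = {}"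
    proof (intro ballI impI)
      fix p q assume "p \<in> h" "q \<in> h" "p \<noteq> q"
      show "I p \<inter> I q = {}" unfolding I_def using \<open>p \<noteq> q\<close> by (rule interval_disj)
    qed
    have big: "\<forall>p\<in>h. a + r * t \<le> card (I p \<inter> V)"
    proof
      fix p assume p: "p \<in> h"
      hence "p + 1 \<le> r * k" using hs by auto
      hence "(p + 1) * m \<le> (r * k) * m" by (rule mult_le_mono1)
      also have "\<dots> = r * (k * m)" by simp
      also have "\<dots> \<le> r * n" using km by simp
      finally have "I p \<subseteq> V" unfolding I_def V_def by auto
      hence "I p \<inter> V = I p" by auto
      moreover have "card (I p) = m" unfolding I_def by simp
      ultimately show "a + r * t \<le> card (I p \<inter> V)" using at by simp
    qed
    have "real (card (Bad r (GH h) V)) \<le> exp (- (real t * (real a ^ (r - 1) / real (r*n) ^ (r - 1)))) * real (fm r (card V))"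
      by (rule bad_bound[OF r1 fh ch p0 disj GH_def fV]) (use cV big in auto)
    thus ?thesis unfolding B_def cV .
  qed
  have fin: "finite (\<Union>h\<in>H. Bad r (GH h) V)" using fH Bad_finite[OF fV] by auto
  have "card {M \<in> ordered_matchings r n. \<not> contains_copy M H} \<le> card (\<Union>h\<in>H. Bad r (GH h) V)"
    unfolding OM by (rule card_mono[OF fin sub])
  also have "\<dots> \<le> (\<Sum>h\<in>H. card (Bad r (GH h) V))" by (rule card_UN_le[OF fH])
  finally have "real (card {M \<in> ordered_matchings r n. \<not> contains_copy M H}) \<le> real (\<Sum>h\<in>H. card (Bad r (GH h) V))"
    by (simp only: of_nat_le_iff)
  also have "\<dots> = (\<Sum>h\<in>H. real (card (Bad r (GH h) V)))" by (rule of_nat_sum)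
  also have "\<dots> \<le> (\<Sum>h\<in>H. B)" by (rule sum_mono) (use each in auto)
  also have "\<dots> = real k * B" using cH by simp
  finally show ?thesis unfolding B_def .
qed



lemma contains_copy_empty: "contains_copy M {}"
  unfolding contains_copy_def
  by (intro exI[of _ "{}"] conjI exI[of _ id]) (auto simp: strict_mono_on_def)

lemma real_div_bound:
  fixes n k :: nat assumes "k > 0"
  shows "real (n div k) \<ge> real n / real k - 1"
proof -
  have e1: "n div k * k + n mod k = n" by (rule div_mult_mod_eq)
  moreover have "n mod k < k" using assms by simp
  moreover have "(n div k + 1) * k = n div k * k + k" by simp
  ultimately have "n < (n div k + 1) * k" by linarith
  hence "real n < (real (n div k) + 1) * real k" by (metis of_nat_1 of_nat_add of_nat_less_iff of_nat_mult)
  hence "real n / real k < real (n div k) + 1" using assms by (simp add: divide_less_eq)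
  thus ?thesis by simp
qed

theorem propositionA3:
  fixes r :: nat and H :: "nat \<Rightarrow> nat set set"
  assumes "r \<ge> 2"
    and "\<And>n. \<exists>k. ordered_matching r k (H n)"
    and "\<And>n. n \<ge> 2 \<Longrightarrow>
           real (card (H n)) \<le> 1 / (2 * real r) * (real n / ln (real n)) powr (1 / real r)"
  shows "(\<lambda>n. prob_contains_copy r n (H n)) \<longlonglongrightarrow> 1"
proof -
  have r1: "r \<ge> 1" using assms(1) by simp
  define s where "s = r - 1"
  have rs: "r = s + 1" and s1: "s \<ge> 1" using assms(1) unfolding s_def by auto
  have rrs: "real r = real s + 1" using rs by simp
  define P where "P n = prob_contains_copy r n (H n)" for n
  define N0 where "N0 = (8*r*(r+1)+1)^2 + 3"
  have fOM: "finite (ordered_matchings r n)" for n using OM_eq PM_finite by simp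
  have cOM: "card (ordered_matchings r n) = fm r (r*n)" for n using OM_eq PM_card[OF r1] by simp
  have Dpos: "fm r (r*n) > 0" for n by (rule fm_pos[OF r1])
  have up: "P n \<le> 1" for n
  proof -
    have "card {M \<in> ordered_matchings r n. contains_copy M (H n)} \<le> card (ordered_matchings r n)"
      by (rule card_mono[OF fOM]) auto
    hence "real (card {M \<in> ordered_matchings r n. contains_copy M (H n)}) \<le> real (card (ordered_matchings r n))"
      by simp
    moreover have "real (card (ordered_matchings r n)) > 0" using cOM Dpos by simp
    ultimately show ?thesis unfolding P_def prob_contains_copy_def by simp
  qed
  have low: "1 - real n powr (-1/4) \<le> P n" if n: "n \<ge> N0" for n
  proof -
    obtain k where om: "ordered_matching r k (H n)" using assms(2) by blast
    have cH: "card (H n) = k" using card_H[OF om r1] .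
    define A where "A = {M \<in> ordered_matchings r n. contains_copy M (H n)}"
    define Bn where "Bn = {M \<in> ordered_matchings r n. \<not> contains_copy M (H n)}"
    define D where "D = fm r (r*n)"
    have Dp: "real D > 0" using Dpos unfolding D_def by simp
    have AB: "card A + card Bn = D"
    proof -
      have "A \<union> Bn = ordered_matchings r n" "A \<inter> Bn = {}" unfolding A_def Bn_def by auto
      moreover have "finite A" "finite Bn" using fOM unfolding A_def Bn_def by auto
      ultimately show ?thesis using card_Un_disjoint[of A Bn] cOM unfolding D_def by simp
    qed
    have Pn: "P n = 1 - real (card Bn) / real D"
    proof -
      have "P n = real (card A) / real D" unfolding P_def prob_contains_copy_def A_def D_def cOM ..
      also have "real (card A) = real D - real (card Bn)" using AB by (metis add_diff_cancel_right' of_nat_add)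
      finally show ?thesis using Dp by (simp add: diff_divide_distrib)
    qed
    have n3: "real n \<ge> 3" using n unfolding N0_def by simp
    have "real (card Bn) / real D \<le> real n powr (-1/4)"
    proof (cases "k = 0")
      case True
      have "H n = {}"
      proof (rule ccontr)
        assume "H n \<noteq> {}"
        then obtain e where e: "e \<in> H n" by auto
        have "e \<subseteq> {0..<r*0}" "card e = r" using om e True
          unfolding ordered_matching_def perfect_r_matching_def by auto
        thus False using r1 by simp
      qed
      hence "Bn = {}" unfolding Bn_def using contains_copy_empty by simp
      thus ?thesis by simp
    next
      case False
      hence k1: "k \<ge> 1" by simp
      define m where "m = n div k"
      define t where "t = m div (2*r)"
      define a where "a = m - r*t"
      have rt: "t * (2*r) \<le> m" unfolding t_def by (rule div_times_less_eq_dividend)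
      have "t * (2*r) = 2 * (r * t)" by (simp add: algebra_simps)
      hence rtm: "r * t \<le> m" using rt by linarith
      have at: "a + r * t \<le> m" unfolding a_def using rtm by simp
      have hk: "real k \<le> 1 / (2 * real r) * (real n / ln (real n)) powr (1 / real r)"
        using assms(3)[of n] n3 cH by simp
      have lnpos: "ln (real n) > 0" using n3 by simp
      define y where "y = real n / ln (real n)"
      have ypos: "y > 0" unfolding y_def using lnpos n3 by simp
      have rpos: "2 * real r > 0" using r1 by simp
      have "real k \<le> y powr (1 / real r) / (2 * real r)" using hk unfolding y_def by simp
      hence "real k * (2 * real r) \<le> y powr (1 / real r)" using rpos by (simp add: pos_le_divide_eq)
      hence "(real k * (2 * real r)) ^ r \<le> (y powr (1 / real r)) ^ r" by (rule power_mono) simp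
      also have "\<dots> = y powr (real r * (1 / real r))" using ypos by (simp add: powr_power)
      also have "\<dots> = y" using r1 ypos by simp
      finally have "(real k * (2 * real r)) ^ r \<le> real n / ln (real n)" unfolding y_def .
      hence "(real k * (2 * real r)) ^ r * ln (real n) \<le> real n" using lnpos by (simp add: pos_le_divide_eq)
      moreover have eqK: "(real k * (2 * real r)) ^ r = real k ^ (s+1) * (2 * (real s + 1)) ^ (s+1)"
        unfolding rrs[symmetric] rs[symmetric] by (rule power_mult_distrib)
      ultimately have "real k ^ (s+1) * (2 * (real s + 1)) ^ (s+1) * ln (real n) \<le> real n" by simp
      hence Kr: "real k ^ (s+1) * ((2 * (real s + 1)) ^ (s+1) * ln (real n)) \<le> real n"
        by (simp only: mult.assoc)
      have mu: "real m \<ge> real n / real k - 1" unfolding m_def using real_div_bound k1 by simp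
      have tm: "real t \<ge> real m / (2 * (real s + 1)) - 1"
      proof -
        have "real t \<ge> real m / real (2*r) - 1" unfolding t_def by (rule real_div_bound) (use r1 in simp)
        thus ?thesis using rrs by simp
      qed
      have am: "real a \<ge> real m / 2"
      proof -
        have "r * t \<le> m" using rtm .
        hence "real a = real m - real r * real t" unfolding a_def by (simp add: of_nat_diff)
        moreover have "real t * (2 * real r) \<le> real m" using rt by (metis of_nat_le_iff of_nat_mult of_nat_numeral)
        ultimately show ?thesis by (simp add: algebra_simps)
      qed
      have big: "sqrt (real n) \<ge> 8 * (real s + 1) * (real s + 2) + 1"
      proof -
        have "(8*r*(r+1)+1)^2 \<le> n" using n unfolding N0_def by simp
        hence "real ((8*r*(r+1)+1)^2) \<le> real n" by (simp only: of_nat_le_iff)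
        moreover have "real ((8*r*(r+1)+1)^2) = (8 * (real s + 1) * (real s + 2) + 1) ^ 2"
          unfolding rs by (simp add: algebra_simps)
        ultimately have h: "(8 * (real s + 1) * (real s + 2) + 1) ^ 2 \<le> real n" by linarith
        show ?thesis by (rule real_le_rsqrt[OF h])
      qed
      have R: "real k * exp (- (real t * (real a ^ s / ((real s + 1) * real n) ^ s))) \<le> real n powr (-1/4)
          \<and> real k ^ 2 \<le> real n"
        by (rule R1[OF s1 _ n3 Kr mu tm am big]) (use k1 in simp)
      have "k ^ 2 \<le> n" using R by (metis of_nat_le_iff of_nat_power)
      moreover have "k \<le> k ^ 2" using k1 by (simp add: power2_eq_square)
      ultimately have "k \<le> n" by simp
      hence mpos: "m > 0" unfolding m_def using k1 by (simp add: div_greater_zero_iff)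
      have NB: "real (card Bn) \<le> real k * (exp (- (real t * (real a ^ (r - 1) / real (r*n) ^ (r - 1)))) * real D)"
        unfolding Bn_def D_def by (rule noncopy_bound[OF r1 om k1 m_def mpos at])
      have ex: "real a ^ (r - 1) / real (r*n) ^ (r - 1) = real a ^ s / ((real s + 1) * real n) ^ s"
        unfolding s_def using rrs by simp
      have "real (card Bn) / real D \<le> real k * exp (- (real t * (real a ^ s / ((real s + 1) * real n) ^ s)))"
        using NB Dp unfolding ex by (simp add: divide_le_eq algebra_simps)
      thus ?thesis using R by linarith
    qed
    thus ?thesis using Pn by linarith
  qed
  have lim0: "(\<lambda>n. real n powr (-1/4)) \<longlonglongrightarrow> 0"
    by (rule tendsto_neg_powr) (simp_all add: filterlim_real_sequentially)
  have lim1: "(\<lambda>n. 1 - real n powr (-1/4)) \<longlonglongrightarrow> 1"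
    using tendsto_diff[OF tendsto_const lim0, of 1] by simp
  have "P \<longlonglongrightarrow> 1"
  proof (rule tendsto_sandwich[OF _ _ lim1 tendsto_const])
    show "\<forall>\<^sub>F n in sequentially. 1 - real n powr (-1/4) \<le> P n"
      by (rule eventually_sequentiallyI[of N0]) (rule low)
    show "\<forall>\<^sub>F n in sequentially. P n \<le> 1" using up by simp
  qed
  thus ?thesis unfolding P_def .
qed

end
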